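(* Let $\mu=(p,q,r,s)\in\mathbb{C}^4$, $\phi\in\Phi_\mu$, and $X\in\Omega_1$ with $x=\phi(X)$. The boundary of $X$ is a bi-infinite path of edges alternating $X\cap Y_n$, $X\cap Z_n$ ($n\in\mathbb{Z}$), with $Y_n\in\Omega_2$, $Z_n\in\Omega_3$, indexed so that $y_{n+1}=q-xz_n-y_n$ and $z_{n+1}=r-xy_{n+1}-z_n$ for all $n$, where $y_n=\phi(Y_n)$, $z_n=\phi(Z_n)$. For $x\neq\pm2$ put $\mathfrak y=\frac{2q-xr}{4-x^2}$, $\mathfrak z=\frac{2r-xq}{4-x^2}$, and say that $x$ is degenerate if $(px+s-x^2)(4-x^2)+q^2+r^2-qrx=0$. Then: (1) if $x\in(-2,2)$, then $|y_n|$ and $|z_n|$ remain bounded; (2) if $x=\pm2$, then $|y_n|$ and $|z_n|$ grow at most quadratically in $n$; (3) if $x\notin[-2,2]$ and $x$ is not degenerate, then $|y_n|$ and $|z_n|$ grow exponentially as $n\to+\infty$ and as $n\to-\infty$; (4) if $x\notin[-2,2]$ and $x$ is degenerate, then exactly one of the following holds: $y_n\to\mathfrak y$, $z_n\to\mathfrak z$ as $n\to-\infty$ and $|y_n|,|z_n|$ grow exponentially as $n\to+\infty$; or $y_n\to\mathfrak y$, $z_n\to\mathfrak z$ as $n\to+\infty$ and $|y_n|,|z_n|$ grow exponentially as $n\to-\infty$; or $y_n=\mathfrak y$ and $z_n=\mathfrak z$ for all $n\in\mathbb{Z}$.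
   Context: Let $\Sigma$ be a countably infinite simplicial tree, properly embedded in the plane, all of whose vertices have degree $3$. A complementary region is the closure of a connected component of the complement of $\Sigma$; $\Omega$ is the set of complementary regions, $E(\Sigma)$ the set of edges. Every edge $e$ is the intersection of exactly two regions $X,Y$, and its two endpoints lie on two further regions $Z,W$ respectively; write $e\leftrightarrow(X,Y;Z,W)$. Three regions meet at each vertex. Fix a coloring $\mathcal C:\Omega\cup E(\Sigma)\to\{1,2,3\}$ such that for every $e\leftrightarrow(X,Y;Z,W)$, $\mathcal C(e)=\mathcal C(Z)=\mathcal C(W)$ and $\mathcal C(e),\mathcal C(X),\mathcal C(Y)$ are pairwise distinct; $\Omega_i$, $E_i$ denote regions/edges of color $i$. For $\mu=(p,q,r,s)\in\mathbb{C}^4$, a $\mu$-Markoff map is $\phi:\Omega\to\mathbb{C}$ such that (i) at every vertex with regions $X\in\Omega_1,Y\in\Omega_2,Z\in\Omega_3$, $x^2+y^2+z^2+xyz=px+qy+rz+s$ where $x=\phi(X)$, etc.; (ii) for $e\in E_1$, $e\leftrightarrow(Y,Z;X,X')$: $\phi(X)+\phi(X')=p-\phi(Y)\phi(Z)$; for $e\in E_2$, $e\leftrightarrow(X,Z;Y,Y')$: $\phi(Y)+\phi(Y')=q-\phi(X)\phi(Z)$; for $e\in E_3$, $e\leftrightarrow(X,Y;Z,Z')$: $\phi(Z)+\phi(Z')=r-\phi(X)\phi(Y)$. $\Phi_\mu$ is the set of such maps. (The degeneracy condition on $x$ is the condition $AB=0$ of the paper, where $y_n=A\Lambda^{2n}+B\Lambda^{-2n}+\mathfrak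 y$ with $\Lambda=(x+\sqrt{x^2-4})/2$.) *)

theory Defs
  imports Complex_Main
begin

text \<open>Boundary data of a region X of colour 1 for a mu-Markoff map:
  y n = phi(Y_n), z n = phi(Z_n), the boundary of X being the bi-infinite path
  of edges X\<inter>Y_n, X\<inter>Z_n, X\<inter>Y_(n+1), ...  The vertices on the boundary of X
  are (X,Y_n,Z_n) and (X,Y_(n+1),Z_n); the edges X\<inter>Z_n (colour 2) and
  X\<inter>Y_(n+1) (colour 3) give the edge relations.\<close>
definition boundary_seq ::
  "complex \<Rightarrow> complex \<Rightarrow> complex \<Rightarrow> complex \<Rightarrow> complex \<Rightarrow> (int \<Rightarrow> complex) \<Rightarrow> (int \<Rightarrow> complex) \<Rightarrow> bool"
  where
  "boundary_seq p q r s x y z \<longleftrightarrow>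
     (\<forall>n. x\<^sup>2 + (y n)\<^sup>2 + (z n)\<^sup>2 + x * y n * z n = p * x + q * y n + r * z n + s) \<and>
     (\<forall>n. x\<^sup>2 + (y (n+1))\<^sup>2 + (z n)\<^sup>2 + x * y (n+1) * z n = p * x + q * y (n+1) + r * z n + s) \<and>
     (\<forall>n. y (n+1) = q - x * z n - y n) \<and>
     (\<forall>n. z (n+1) = r - x * y (n+1) - z n)"

definition degenerate :: "complex \<Rightarrow> complex \<Rightarrow> complex \<Rightarrow> complex \<Rightarrow> complex \<Rightarrow> bool" where
  "degenerate p q r s x \<longleftrightarrow>
     (p * x + s - x\<^sup>2) * (4 - x\<^sup>2) + q\<^sup>2 + r\<^sup>2 - q * r * x = 0"

definition exp_growth_top :: "(int \<Rightarrow> complex) \<Rightarrow> bool" where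
  "exp_growth_top f \<longleftrightarrow>
     (\<exists>c>0. \<exists>L>(1::real). \<forall>\<^sub>F n in at_top. c * L ^ nat n \<le> cmod (f n))"

definition exp_growth_bot :: "(int \<Rightarrow> complex) \<Rightarrow> bool" where
  "exp_growth_bot f \<longleftrightarrow>
     (\<exists>c>0. \<exists>L>(1::real). \<forall>\<^sub>F n in at_bot. c * L ^ nat (- n) \<le> cmod (f n))"

end

theory Submission
  imports Defs
begin

lemma G_top:
  fixes f :: "int \<Rightarrow> complex" and A L B :: real
  assumes A: "A > 0" and L: "L > 1" and h: "\<forall>m. A * L^m - B \<le> cmod (f (int m))"
  shows "exp_growth_top f"
proof -
  obtain N where N: "2*B/A < L^N" using real_arch_pow[OF L] by blast
  have "\<forall>n\<ge>int N. A/2 * L^nat n \<le> cmod (f n)"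
  proof (intro allI impI)
    fix n assume n: "int N \<le> n"
    then have "N \<le> nat n" by simp
    then have "L^N \<le> L^nat n" using L by (simp add: power_increasing)
    with N have "2*B/A < L^nat n" by simp
    then have "2*B < A * L^nat n" using A by (simp add: field_simps)
    then have 1: "A/2 * L^nat n \<le> A * L^nat n - B" by linarith
    have "A * L^nat n - B \<le> cmod (f (int (nat n)))" using h by blast
    moreover have "int (nat n) = n" using n by simp
    ultimately show "A/2 * L^nat n \<le> cmod (f n)" using 1 by simp
  qed
  then have ev: "\<forall>\<^sub>F n in at_top. A/2 * L^nat n \<le> cmod (f n)"
    using eventually_at_top_linorder by blast
  have "A/2 > 0" using A by simp
  then show ?thesis unfolding exp_growth_top_def using L ev by blast
qed

lemma G_bot:
  fixes f :: "int \<Rightarrow> complex" and A L B :: real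
  assumes A: "A > 0" and L: "L > 1" and h: "\<forall>m. A * L^m - B \<le> cmod (f (- int m))"
  shows "exp_growth_bot f"
proof -
  obtain N where N: "2*B/A < L^N" using real_arch_pow[OF L] by blast
  have "\<forall>n\<le>- int N. A/2 * L^nat (-n) \<le> cmod (f n)"
  proof (intro allI impI)
    fix n assume n: "n \<le> - int N"
    then have "N \<le> nat (-n)" by simp
    then have "L^N \<le> L^nat (-n)" using L by (simp add: power_increasing)
    with N have "2*B/A < L^nat (-n)" by simp
    then have "2*B < A * L^nat (-n)" using A by (simp add: field_simps)
    then have 1: "A/2 * L^nat (-n) \<le> A * L^nat (-n) - B" by linarith
    have "A * L^nat (-n) - B \<le> cmod (f (- int (nat (-n))))" using h by blast
    moreover have "- int (nat (-n)) = n" using n by simp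
    ultimately show "A/2 * L^nat (-n) \<le> cmod (f n)" using 1 by simp
  qed
  then have ev: "\<forall>\<^sub>F n in at_bot. A/2 * L^nat (-n) \<le> cmod (f n)"
    using eventually_at_bot_linorder by blast
  have "A/2 > 0" using A by simp
  then show ?thesis unfolding exp_growth_bot_def using L ev by blast
qed

lemma T_top:
  fixes f :: "int \<Rightarrow> complex" and B r :: real
  assumes r: "0 \<le> r" "r < 1" and h: "\<forall>m. cmod (f (int m) - l) \<le> B * r^m"
  shows "(f \<longlongrightarrow> l) at_top"
proof (rule tendstoI)
  fix e :: real assume e: "e > 0"
  have "(\<lambda>m. r^m) \<longlonglongrightarrow> 0" using r by (intro LIMSEQ_power_zero) simp
  then have "(\<lambda>m. B * r^m) \<longlonglongrightarrow> 0" by (rule tendsto_mult_right_zero)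
  then have "eventually (\<lambda>m. B * r^m < e) sequentially" using e by (rule order_tendstoD)
  then obtain N where N: "\<forall>m\<ge>N. B * r^m < e" unfolding eventually_sequentially by blast
  have "\<forall>n\<ge>int N. dist (f n) l < e"
  proof (intro allI impI)
    fix n assume n: "int N \<le> n"
    then have "N \<le> nat n" by simp
    then have "B * r^nat n < e" using N by blast
    moreover have "cmod (f (int (nat n)) - l) \<le> B * r^nat n" using h by blast
    moreover have "int (nat n) = n" using n by simp
    ultimately show "dist (f n) l < e" by (simp add: dist_norm)
  qed
  then show "\<forall>\<^sub>F n in at_top. dist (f n) l < e"
    using eventually_at_top_linorder by blast
qed

lemma T_bot:
  fixes f :: "int \<Rightarrow> complex" and B r :: real
  assumes r: "0 \<le> r" "r < 1" and h: "\<forall>m. cmod (f (- int m) - l) \<le> B * r^m"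
  shows "(f \<longlongrightarrow> l) at_bot"
proof (rule tendstoI)
  fix e :: real assume e: "e > 0"
  have "(\<lambda>m. r^m) \<longlonglongrightarrow> 0" using r by (intro LIMSEQ_power_zero) simp
  then have "(\<lambda>m. B * r^m) \<longlonglongrightarrow> 0" by (rule tendsto_mult_right_zero)
  then have "eventually (\<lambda>m. B * r^m < e) sequentially" using e by (rule order_tendstoD)
  then obtain N where N: "\<forall>m\<ge>N. B * r^m < e" unfolding eventually_sequentially by blast
  have "\<forall>n\<le>- int N. dist (f n) l < e"
  proof (intro allI impI)
    fix n assume n: "n \<le> - int N"
    then have "N \<le> nat (-n)" by simp
    then have "B * r^nat (-n) < e" using N by blast
    moreover have "cmod (f (- int (nat (-n))) - l) \<le> B * r^nat (-n)" using h by blast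
    moreover have "- int (nat (-n)) = n" using n by simp
    ultimately show "dist (f n) l < e" by (simp add: dist_norm)
  qed
  then show "\<forall>\<^sub>F n in at_bot. dist (f n) l < e"
    using eventually_at_bot_linorder by blast
qed

lemma NT_top:
  assumes g: "exp_growth_top f" and t: "(f \<longlongrightarrow> l) at_top"
  shows False
proof -
  obtain c L where c: "c > 0" and L: "L > 1" and ev: "\<forall>\<^sub>F n in at_top. c * L ^ nat n \<le> cmod (f n)"
    using g unfolding exp_growth_top_def by blast
  have "\<forall>\<^sub>F n in at_top. dist (f n) l < 1" using t by (rule tendstoD) simp
  then have "\<forall>\<^sub>F n in at_top. c * L ^ nat n \<le> cmod (f n) \<and> dist (f n) l < 1"
    using ev by (auto intro: eventually_conj)
  then obtain N where N: "\<forall>n\<ge>N. c * L ^ nat n \<le> cmod (f n) \<and> dist (f n) l < 1"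
    unfolding eventually_at_top_linorder by blast
  obtain m where m: "(cmod l + 1)/c < L^m" using real_arch_pow[OF L] by blast
  define n where "n = max N (int m)"
  have "m \<le> nat n" unfolding n_def by simp
  then have "L^m \<le> L^nat n" using L by (simp add: power_increasing)
  then have "(cmod l + 1)/c < L^nat n" using m by simp
  then have 1: "cmod l + 1 < c * L^nat n" using c by (simp add: field_simps)
  have 2: "c * L ^ nat n \<le> cmod (f n)" "dist (f n) l < 1" using N unfolding n_def by auto
  have "cmod (f n) \<le> cmod (f n - l) + cmod l" using norm_triangle_ineq2[of "f n" l] by simp
  then show False using 1 2 by (simp add: dist_norm)
qed

lemma NT_bot:
  assumes g: "exp_growth_bot f" and t: "(f \<longlongrightarrow> l) at_bot"
  shows False
proof -
  obtain c L where c: "c > 0" and L: "L > 1" and ev: "\<forall>\<^sub>F n in at_bot. c * L ^ nat (-n) \<le> cmod (f n)"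
    using g unfolding exp_growth_bot_def by blast
  have "\<forall>\<^sub>F n in at_bot. dist (f n) l < 1" using t by (rule tendstoD) simp
  then have "\<forall>\<^sub>F n in at_bot. c * L ^ nat (-n) \<le> cmod (f n) \<and> dist (f n) l < 1"
    using ev by (auto intro: eventually_conj)
  then obtain N where N: "\<forall>n\<le>N. c * L ^ nat (-n) \<le> cmod (f n) \<and> dist (f n) l < 1"
    unfolding eventually_at_bot_linorder by blast
  obtain m where m: "(cmod l + 1)/c < L^m" using real_arch_pow[OF L] by blast
  define n where "n = min N (- int m)"
  have "m \<le> nat (-n)" unfolding n_def by simp
  then have "L^m \<le> L^nat (-n)" using L by (simp add: power_increasing)
  then have "(cmod l + 1)/c < L^nat (-n)" using m by simp
  then have 1: "cmod l + 1 < c * L^nat (-n)" using c by (simp add: field_simps)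
  have 2: "c * L ^ nat (-n) \<le> cmod (f n)" "dist (f n) l < 1" using N unfolding n_def by auto
  have "cmod (f n) \<le> cmod (f n - l) + cmod l" using norm_triangle_ineq2[of "f n" l] by simp
  then show False using 1 2 by (simp add: dist_norm)
qed


lemma nat_part:
  fixes F :: "nat \<Rightarrow> complex" and u v w P Q aa bb l :: complex
  assumes F: "\<forall>m. F m = l + (P * u^m * aa - Q * v^m * bb) / w"
    and u: "cmod u < 1" and v: "cmod v > 1" and w: "w \<noteq> 0" and Q: "Q \<noteq> 0"
  shows "(bb \<noteq> 0 \<longrightarrow> (\<exists>A>0. \<exists>L>1. \<exists>B. \<forall>m. A * L^m - B \<le> cmod (F m)))
       \<and> (bb = 0 \<longrightarrow> (\<exists>B r. 0 \<le> r \<and> r < 1 \<and> (\<forall>m. cmod (F m - l) \<le> B * r^m)))"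
proof (intro conjI impI)
  assume bb: "bb \<noteq> 0"
  define A where "A = cmod Q * cmod bb / cmod w"
  define B where "B = cmod P * cmod aa / cmod w + cmod l"
  have wp: "cmod w > 0" using w by simp
  have A: "A > 0" unfolding A_def using Q bb w by simp
  have "\<forall>m. A * (cmod v)^m - B \<le> cmod (F m)"
  proof
    fix m
    have um: "cmod u ^ m \<le> 1" using u by (simp add: power_le_one)
    have e1: "cmod (P * u^m * aa) \<le> cmod P * cmod aa"
      proof -
      have "cmod aa * cmod u^m \<le> cmod aa" using um by (simp add: mult_left_le)
      then have "cmod P * (cmod aa * cmod u^m) \<le> cmod P * cmod aa" by (simp add: mult_left_mono)
      then show ?thesis by (simp add: norm_mult norm_power mult.commute mult.left_commute)
    qed
    have e2: "cmod (Q * v^m * bb) = cmod Q * cmod bb * cmod v ^ m"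
      by (simp add: norm_mult norm_power)
    have "cmod (Q * v^m * bb) - cmod (P * u^m * aa) \<le> cmod (P * u^m * aa - Q * v^m * bb)"
      using norm_triangle_ineq2[of "Q * v^m * bb" "P * u^m * aa"] by (simp add: norm_minus_commute)
    then have "cmod Q * cmod bb * cmod v ^ m - cmod P * cmod aa \<le> cmod (P * u^m * aa - Q * v^m * bb)"
      using e1 e2 by linarith
    then have "(cmod Q * cmod bb * cmod v ^ m - cmod P * cmod aa) / cmod w \<le> cmod ((P * u^m * aa - Q * v^m * bb) / w)"
      using wp by (simp add: norm_divide divide_right_mono)
    moreover have "A * (cmod v)^m - (cmod P * cmod aa / cmod w) = (cmod Q * cmod bb * cmod v ^ m - cmod P * cmod aa) / cmod w"
      unfolding A_def using wp by (simp add: field_simps)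
    moreover have "cmod ((P * u^m * aa - Q * v^m * bb) / w) - cmod l \<le> cmod (F m)"
      using F norm_diff_ineq[of "(P * u^m * aa - Q * v^m * bb) / w" l] by (simp add: add.commute)
    ultimately show "A * (cmod v)^m - B \<le> cmod (F m)" unfolding B_def by linarith
  qed
  then show "\<exists>A>0. \<exists>L>1. \<exists>B. \<forall>m. A * L^m - B \<le> cmod (F m)" using A v by blast
next
  assume bb: "bb = 0"
  have "\<forall>m. cmod (F m - l) \<le> (cmod P * cmod aa / cmod w) * cmod u ^ m"
    using F bb by (simp add: norm_mult norm_power norm_divide mult_ac)
  then show "\<exists>B r. 0 \<le> r \<and> r < 1 \<and> (\<forall>m. cmod (F m - l) \<le> B * r^m)" using u
    by (intro exI[of _ "cmod P * cmod aa / cmod w"] exI[of _ "cmod u"]) simp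
qed


lemma roots:
  fixes x :: complex
  assumes x: "x \<notin> complex_of_real ` {-2..2}"
  shows "\<exists>\<alpha> \<beta>. \<alpha> + \<beta> = -x \<and> \<alpha> * \<beta> = 1 \<and> cmod \<alpha> > 1"
proof -
  define sq where "sq = csqrt (x\<^sup>2 - 4)"
  define a where "a = (-x + sq)/2"
  define b where "b = (-x - sq)/2"
  have sum: "a + b = -x" unfolding a_def b_def by (simp add: field_simps)
  have "sq^2 = x\<^sup>2 - 4" unfolding sq_def by simp
  then have prod: "a * b = 1" unfolding a_def b_def by (simp add: field_simps power2_eq_square)
  then have nab: "cmod a * cmod b = 1" by (metis norm_mult norm_one)
  consider "cmod a > 1" | "cmod a < 1" | "cmod a = 1" by linarith
  then show ?thesis
  proof cases
    case 1 then show ?thesis using sum prod by blast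
  next
    case 2
    have "a \<noteq> 0" using prod by auto
    then have a0: "cmod a > 0" by simp
    have "cmod a * 1 < cmod a * cmod b" using nab 2 by simp
    then have "1 < cmod b" using a0 by (simp add: mult_less_cancel_left_pos)
    then show ?thesis using sum prod by (intro exI[of _ b] exI[of _ a]) (simp add: add.commute mult.commute)
  next
    case 3
    have "a * cnj a = 1" using 3 complex_norm_square[of a] by simp
    then have "a * cnj a = a * b" using prod by simp
    moreover have "a \<noteq> 0" using prod by auto
    ultimately have "b = cnj a" by simp
    then have "x = - complex_of_real (2 * Re a)" using sum complex_add_cnj[of a] by (metis minus_minus)
    moreover have "\<bar>Re a\<bar> \<le> 1" using abs_Re_le_cmod[of a] 3 by simp
    ultimately have "x \<in> complex_of_real ` {-2..2}"
      by (intro image_eqI[of _ _ "- (2 * Re a)"]) auto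
    then show ?thesis using x by blast
  qed
qed


lemma geo:
  fixes a :: "int \<Rightarrow> complex"
  assumes h: "\<forall>n. a (n+1) = k * a n" and kk: "k * k' = 1"
  shows "a (int m) = k^m * a 0 \<and> a (- int m) = k'^m * a 0"
proof (induction m)
  case 0 then show ?case by simp
next
  case (Suc m)
  have 1: "a (int (Suc m)) = k * a (int m)" using h[rule_format, of "int m"] by (simp add: add.commute)
  have "a (- int m) = k * a (- int (Suc m))" using h[rule_format, of "- int (Suc m)"] by simp
  then have "k' * a (- int m) = (k' * k) * a (- int (Suc m))" by (simp add: mult.assoc)
  then have 2: "a (- int (Suc m)) = k' * a (- int m)" using kk by (simp add: mult.commute)
  show ?case using 1 2 Suc by simp
qed


lemma abs_le_1_sq: fixes t::real shows "\<bar>t\<bar> \<le> 1 + t\<^sup>2"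
proof (cases "\<bar>t\<bar> \<le> 1")
  case True
  have "0 \<le> t\<^sup>2" by simp
  then show ?thesis using True by linarith
next
  case False
  then have "\<bar>t\<bar> * 1 \<le> \<bar>t\<bar> * \<bar>t\<bar>" by (intro mult_left_mono) auto
  then have "\<bar>t\<bar> \<le> t\<^sup>2" by (simp add: power2_eq_square)
  then show ?thesis by linarith
qed

lemma int_cases_nat: "\<exists>m. (n::int) = int m \<or> n = - int m"
  by (metis int_cases2)

lemma bounded_real:
  fixes u v :: "int \<Rightarrow> real" and x :: real
  assumes x: "\<bar>x\<bar> < 2" and hu: "\<forall>n. u (n+1) = -x * v n - u n"
    and hv: "\<forall>n. v (n+1) = -x * u (n+1) - v n"
  shows "\<exists>B. \<forall>n. \<bar>u n\<bar> \<le> B \<and> \<bar>v n\<bar> \<le> B"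
proof -
  define J where "J n = (u n)\<^sup>2 + x * u n * v n + (v n)\<^sup>2" for n
  have step: "J (n+1) = J n" for n
  proof -
    have eu: "u (n+1) = -x * v n - u n" using hu by blast
    have ev: "v (n+1) = -x * u (n+1) - v n" using hv by blast
    have 1: "(u (n+1))\<^sup>2 + x * u (n+1) * v n + (v n)\<^sup>2 = J n"
      unfolding J_def eu by (simp add: power2_eq_square algebra_simps)
    have "J (n+1) = (u (n+1))\<^sup>2 + x * u (n+1) * v n + (v n)\<^sup>2"
      unfolding J_def ev by (simp add: power2_eq_square algebra_simps)
    then show ?thesis using 1 by simp
  qed
  have Jc: "J n = J 0" for n
  proof (induction n rule: int_induct[where k=0])
    case base then show ?case by simp
  next
    case (step1 i) then show ?case using step[of i] by simp
  next
    case (step2 i) then show ?case using step[of "i-1"] by simp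
  qed
  define e where "e = 1 - \<bar>x\<bar>/2"
  have e: "e > 0" unfolding e_def using x by simp
  have key: "e * ((u n)\<^sup>2 + (v n)\<^sup>2) \<le> J 0" for n
  proof -
    have "2 * \<bar>u n\<bar> * \<bar>v n\<bar> \<le> (u n)\<^sup>2 + (v n)\<^sup>2"
      using sum_squares_bound[of "\<bar>u n\<bar>" "\<bar>v n\<bar>"] by simp
    then have "\<bar>x\<bar> * (2 * \<bar>u n\<bar> * \<bar>v n\<bar>) \<le> \<bar>x\<bar> * ((u n)\<^sup>2 + (v n)\<^sup>2)"
      by (simp add: mult_left_mono)
    moreover have "- (x * u n * v n) \<le> \<bar>x\<bar> * \<bar>u n\<bar> * \<bar>v n\<bar>"
      by (metis abs_ge_minus_self abs_mult)
    ultimately have "e * ((u n)\<^sup>2 + (v n)\<^sup>2) \<le> J n" unfolding e_def J_def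
      by (simp add: algebra_simps)
    then show ?thesis using Jc by metis
  qed
  have "\<bar>u n\<bar> \<le> 1 + J 0 / e \<and> \<bar>v n\<bar> \<le> 1 + J 0 / e" for n
  proof -
    have "(u n)\<^sup>2 + (v n)\<^sup>2 \<le> J 0 / e" using key[of n] e by (simp add: field_simps)
    moreover have "\<bar>u n\<bar> \<le> 1 + (u n)\<^sup>2" "\<bar>v n\<bar> \<le> 1 + (v n)\<^sup>2"
      by (rule abs_le_1_sq)+
    moreover have "(u n)\<^sup>2 \<ge> 0" "(v n)\<^sup>2 \<ge> 0" by simp_all
    ultimately show ?thesis by linarith
  qed
  then show ?thesis by blast
qed


lemma quad:
  fixes w :: "int \<Rightarrow> complex"
  assumes h: "\<forall>n. w (n+1) + w (n-1) = 2 * w n + c"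
  shows "\<exists>C. \<forall>n. cmod (w n) \<le> C * (1 + (real_of_int n)\<^sup>2)"
proof -
  define G where "G n = 2 * w 0 + 2 * of_int n * (w 1 - w 0) + c * of_int (n * (n - 1))" for n
  have P: "2 * w n = G n \<and> 2 * w (n+1) = G (n+1)" for n
  proof (induction n rule: int_induct[where k=0])
    case base then show ?case unfolding G_def by simp
  next
    case (step1 i)
    have e0: "w (i+1+1) + w (i+1-1) = 2 * w (i+1) + c" using h by blast
    have "i+1-1 = i" by simp
    then have e: "w (i+1+1) = 2 * w (i+1) + c - w i" using e0 by (metis add_diff_cancel_right')
    have "2 * w (i+1+1) = 2 * (2 * w (i+1)) + 2 * c - 2 * w i"
      unfolding e by (simp add: algebra_simps)
    also have "\<dots> = 2 * G (i+1) + 2 * c - G i" using step1 by simp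
    also have "\<dots> = G (i+1+1)" unfolding G_def by (simp add: algebra_simps)
    finally show ?case using step1 by simp
  next
    case (step2 i)
    have e0: "w (i+1) + w (i-1) = 2 * w i + c" using h by blast
    then have e: "w (i-1) = 2 * w i + c - w (i+1)" by (metis add_diff_cancel_left')
    have "2 * w (i-1) = 2 * (2 * w i) + 2 * c - 2 * w (i+1)"
      unfolding e by (simp add: algebra_simps)
    also have "\<dots> = 2 * G i + 2 * c - G (i+1)" using step2 by simp
    also have "\<dots> = G (i-1)" unfolding G_def by (simp add: algebra_simps)
    finally show ?case using step2 by simp
  qed
  define C where "C = cmod (w 0) + cmod (w 1 - w 0) + cmod c"
  have "cmod (w n) \<le> C * (1 + (real_of_int n)\<^sup>2)" for n
  proof -
    define t where "t = real_of_int n"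
    have n1: "\<bar>t\<bar> \<le> 1 + t\<^sup>2" by (rule abs_le_1_sq)
    have n2: "\<bar>real_of_int (n * (n - 1))\<bar> / 2 \<le> 1 + t\<^sup>2"
    proof -
      have "\<bar>real_of_int (n * (n - 1))\<bar> = \<bar>t\<bar> * \<bar>t - 1\<bar>" unfolding t_def by (simp add: abs_mult)
      also have "\<dots> \<le> \<bar>t\<bar> * (\<bar>t\<bar> + 1)" by (intro mult_left_mono) auto
      also have "\<dots> = t\<^sup>2 + \<bar>t\<bar>" by (simp add: algebra_simps power2_eq_square abs_mult_self_eq)
      finally show ?thesis using n1 by simp
    qed
    have wn: "w n = w 0 + of_int n * (w 1 - w 0) + c * of_int (n * (n - 1)) / 2"
      using P[of n] unfolding G_def by (simp add: field_simps)
    have "cmod (w n) \<le> cmod (w 0) + cmod (of_int n * (w 1 - w 0)) + cmod (c * of_int (n * (n - 1)) / 2)"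
      unfolding wn by (meson norm_triangle_ineq order_trans add_mono order_refl)
    also have "\<dots> = cmod (w 0) + \<bar>t\<bar> * cmod (w 1 - w 0) + cmod c * (\<bar>real_of_int (n * (n - 1))\<bar> / 2)"
      unfolding t_def by (simp add: norm_mult norm_divide norm_of_int del: of_int_mult of_int_diff)
    also have "\<dots> \<le> cmod (w 0) * (1 + t\<^sup>2) + (1 + t\<^sup>2) * cmod (w 1 - w 0) + cmod c * (1 + t\<^sup>2)"
      using mult_left_mono[of 1 "1+t\<^sup>2" "cmod (w 0)"]
      by (intro add_mono mult_right_mono mult_left_mono n1 n2) simp_all
    also have "\<dots> = C * (1 + t\<^sup>2)" unfolding C_def by (simp add: algebra_simps)
    finally show ?thesis unfolding t_def .
  qed
  then show ?thesis by blast
qed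

lemma ab_step:
  fixes Y Z :: "int \<Rightarrow> complex"
  assumes hY: "\<forall>n. Y (n+1) = -x * Z n - Y n" and hZ: "\<forall>n. Z (n+1) = -x * Y (n+1) - Z n"
    and s: "\<alpha> + \<beta> = -x" and pr: "\<alpha> * \<beta> = 1"
  shows "Z (n+1) - \<alpha> * Y (n+1) = \<beta>^2 * (Z n - \<alpha> * Y n)"
proof -
  have x: "-x = \<alpha>+\<beta>" using s by simp
  have e1: "Y (n+1) = (\<alpha>+\<beta>) * Z n - Y n" using hY x by (metis minus_mult_commute mult_minus_left)
  have e2: "Z (n+1) = (\<alpha>+\<beta>) * Y (n+1) - Z n" using hZ x by (metis minus_mult_commute mult_minus_left)
  have bb: "\<beta>^2 * \<alpha> = \<beta>" using pr by (simp add: power2_eq_square mult_ac)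
  have "Z (n+1) - \<alpha> * Y (n+1) = \<beta> * ((\<alpha>+\<beta>) * Z n - Y n) - Z n" unfolding e2 e1
    by (simp add: algebra_simps)
  also have "\<dots> = \<beta>^2 * Z n + (\<alpha>*\<beta> - 1) * Z n - \<beta> * Y n" by (simp add: algebra_simps power2_eq_square)
  also have "\<dots> = \<beta>^2 * Z n - (\<beta>^2 * \<alpha>) * Y n" using pr bb by simp
  also have "\<dots> = \<beta>^2 * (Z n - \<alpha> * Y n)" by (simp add: algebra_simps)
  finally show ?thesis .
qed

lemma top_all:
  fixes f :: "int \<Rightarrow> complex"
  assumes F: "\<forall>m. f (int m) = l + (P * u^m * a0 - Q * v^m * b0) / w"
    and u: "cmod u < 1" and v: "cmod v > 1" and w: "w \<noteq> 0" and Q: "Q \<noteq> 0"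
  shows "(b0 \<noteq> 0 \<longrightarrow> exp_growth_top f) \<and> (b0 = 0 \<longrightarrow> (f \<longlongrightarrow> l) at_top)"
proof -
  have R: "(b0 \<noteq> 0 \<longrightarrow> (\<exists>A>0. \<exists>L>1. \<exists>B. \<forall>m. A * L^m - B \<le> cmod (f (int m))))
       \<and> (b0 = 0 \<longrightarrow> (\<exists>B r. 0 \<le> r \<and> r < 1 \<and> (\<forall>m. cmod (f (int m) - l) \<le> B * r^m)))"
    by (rule nat_part[where F="\<lambda>m. f (int m)" and l=l and P=P and u=u and aa=a0 and Q=Q and v=v and bb=b0 and w=w]) (use F u v w Q in simp_all)
  then show ?thesis using G_top T_top by metis
qed

lemma bot_all:
  fixes f :: "int \<Rightarrow> complex"
  assumes F: "\<forall>m. f (- int m) = l + (P * u^m * a0 - Q * v^m * b0) / w"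
    and u: "cmod u < 1" and v: "cmod v > 1" and w: "w \<noteq> 0" and Q: "Q \<noteq> 0"
  shows "(b0 \<noteq> 0 \<longrightarrow> exp_growth_bot f) \<and> (b0 = 0 \<longrightarrow> (f \<longlongrightarrow> l) at_bot)"
proof -
  have R: "(b0 \<noteq> 0 \<longrightarrow> (\<exists>A>0. \<exists>L>1. \<exists>B. \<forall>m. A * L^m - B \<le> cmod (f (- int m))))
       \<and> (b0 = 0 \<longrightarrow> (\<exists>B r. 0 \<le> r \<and> r < 1 \<and> (\<forall>m. cmod (f (- int m) - l) \<le> B * r^m)))"
    by (rule nat_part[where F="\<lambda>m. f (- int m)" and l=l and P=P and u=u and aa=a0 and Q=Q and v=v and bb=b0 and w=w]) (use F u v w Q in simp_all)
  then show ?thesis using G_bot T_bot by metis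
qed

theorem lemma3p8:
  fixes p q r s x :: complex and y z :: "int \<Rightarrow> complex"
  assumes bd: "boundary_seq p q r s x y z"
  defines "yy \<equiv> (2 * q - x * r) / (4 - x\<^sup>2)"
      and "zz \<equiv> (2 * r - x * q) / (4 - x\<^sup>2)"
  shows
    "(x \<in> complex_of_real ` {-2<..<2} \<longrightarrow>
        (\<exists>B. \<forall>n. cmod (y n) \<le> B \<and> cmod (z n) \<le> B))
   \<and> ((x = 2 \<or> x = -2) \<longrightarrow>
        (\<exists>C. \<forall>n. cmod (y n) \<le> C * (1 + (real_of_int n)\<^sup>2) \<and>
                  cmod (z n) \<le> C * (1 + (real_of_int n)\<^sup>2)))
   \<and> ((x \<notin> complex_of_real ` {-2..2} \<and> \<not> degenerate p q r s x) \<longrightarrow>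
        (exp_growth_top y \<and> exp_growth_top z \<and> exp_growth_bot y \<and> exp_growth_bot z))
   \<and> ((x \<notin> complex_of_real ` {-2..2} \<and> degenerate p q r s x) \<longrightarrow>
        (let A = ((y \<longlongrightarrow> yy) at_bot \<and> (z \<longlongrightarrow> zz) at_bot \<and>
                  exp_growth_top y \<and> exp_growth_top z);
             B = ((y \<longlongrightarrow> yy) at_top \<and> (z \<longlongrightarrow> zz) at_top \<and>
                  exp_growth_bot y \<and> exp_growth_bot z);
             C = (\<forall>n. y n = yy \<and> z n = zz)
         in (A \<and> \<not> B \<and> \<not> C) \<or> (\<not> A \<and> B \<and> \<not> C) \<or> (\<not> A \<and> \<not> B \<and> C)))"
proof -
  have yrec: "\<forall>n. y (n+1) = q - x * z n - y n" and zrec: "\<forall>n. z (n+1) = r - x * y (n+1) - z n"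
    and v0: "x\<^sup>2 + (y 0)\<^sup>2 + (z 0)\<^sup>2 + x * y 0 * z 0 = p * x + q * y 0 + r * z 0 + s"
    using bd unfolding boundary_seq_def by blast+
  define D where "D = (p * x + s - x\<^sup>2) * (4 - x\<^sup>2) + q\<^sup>2 + r\<^sup>2 - q * r * x"
  have degD: "degenerate p q r s x \<longleftrightarrow> D = 0" unfolding degenerate_def D_def by simp
  define Y where "Y n = y n - yy" for n
  define Z where "Z n = z n - zz" for n
  have cen: "(\<forall>n. Y (n+1) = -x * Z n - Y n) \<and> (\<forall>n. Z (n+1) = -x * Y (n+1) - Z n)
      \<and> ((Y 0)\<^sup>2 + (Z 0)\<^sup>2 + x * Y 0 * Z 0) * (4 - x\<^sup>2) = D"
    if d: "4 - x\<^sup>2 \<noteq> 0"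
  proof -
    define dd where "dd = 4 - x\<^sup>2"
    have ddn: "dd \<noteq> 0" using d unfolding dd_def .
    have yd: "yy * dd = 2 * q - x * r" unfolding yy_def dd_def using d by simp
    have zd: "zz * dd = 2 * r - x * q" unfolding zz_def dd_def using d by simp
    have "(2 * yy + x * zz) * dd = q * dd" using yd zd dd_def by algebra
    then have hq: "2 * yy + x * zz = q" using ddn by simp
    have "(2 * zz + x * yy) * dd = r * dd" using yd zd dd_def by algebra
    then have hr: "2 * zz + x * yy = r" using ddn by simp
    have c1: "\<forall>n. Y (n+1) = -x * Z n - Y n"
    proof
      fix n
      have "y (n+1) = q - x * z n - y n" using yrec by blast
      then show "Y (n+1) = -x * Z n - Y n" unfolding Y_def Z_def using hq by algebra
    qed
    have c2: "\<forall>n. Z (n+1) = -x * Y (n+1) - Z n"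
    proof
      fix n
      have "z (n+1) = r - x * y (n+1) - z n" using zrec by blast
      then show "Z (n+1) = -x * Y (n+1) - Z n" unfolding Y_def Z_def using hr by algebra
    qed
    define E where "E = yy\<^sup>2 + zz\<^sup>2 + x * yy * zz"
    have "(E * dd) * dd = (q\<^sup>2 + r\<^sup>2 - q * r * x) * dd" unfolding E_def using yd zd dd_def by algebra
    then have Ed: "E * dd = q\<^sup>2 + r\<^sup>2 - q * r * x" using ddn by simp
    have K0: "(Y 0)\<^sup>2 + (Z 0)\<^sup>2 + x * Y 0 * Z 0 = p * x + s - x\<^sup>2 + E"
      unfolding Y_def Z_def E_def using v0 hq hr by algebra
    have "((Y 0)\<^sup>2 + (Z 0)\<^sup>2 + x * Y 0 * Z 0) * (4 - x\<^sup>2) = D"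
      using K0 Ed dd_def unfolding D_def by algebra
    then show ?thesis using c1 c2 by blast
  qed
  have Yy: "y n = yy + Y n" for n unfolding Y_def by simp
  have Zz: "z n = zz + Z n" for n unfolding Z_def by simp

  have P1: "x \<in> complex_of_real ` {-2<..<2} \<longrightarrow> (\<exists>B. \<forall>n. cmod (y n) \<le> B \<and> cmod (z n) \<le> B)"
  proof
    assume "x \<in> complex_of_real ` {-2<..<2}"
    then obtain xr where xr: "-2 < xr" "xr < 2" and xe: "x = complex_of_real xr" by auto
    have ax: "\<bar>xr\<bar> < 2" using xr by auto
    then have "\<bar>xr\<bar>^2 < 2^2" by (intro power_strict_mono) auto
    then have "xr\<^sup>2 < 4" by simp
    moreover have "4 - x\<^sup>2 = complex_of_real (4 - xr\<^sup>2)" unfolding xe by simp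
    ultimately have "4 - x\<^sup>2 \<noteq> 0" by (metis of_real_eq_0_iff less_irrefl eq_iff_diff_eq_0)
    from cen[OF this] have hY: "\<forall>n. Y (n+1) = -x * Z n - Y n" and hZ: "\<forall>n. Z (n+1) = -x * Y (n+1) - Z n"
      by blast+
    have R1: "\<forall>n. Re (Y (n+1)) = -xr * Re (Z n) - Re (Y n)" using hY unfolding xe by simp
    have R2: "\<forall>n. Re (Z (n+1)) = -xr * Re (Y (n+1)) - Re (Z n)" using hZ unfolding xe by simp
    obtain B1 where B1: "\<forall>n. \<bar>Re (Y n)\<bar> \<le> B1 \<and> \<bar>Re (Z n)\<bar> \<le> B1"
      using bounded_real[where u="\<lambda>n. Re (Y n)" and v="\<lambda>n. Re (Z n)" and x=xr] ax R1 R2 by blast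
    have I1: "\<forall>n. Im (Y (n+1)) = -xr * Im (Z n) - Im (Y n)" using hY unfolding xe by simp
    have I2: "\<forall>n. Im (Z (n+1)) = -xr * Im (Y (n+1)) - Im (Z n)" using hZ unfolding xe by simp
    obtain B2 where B2: "\<forall>n. \<bar>Im (Y n)\<bar> \<le> B2 \<and> \<bar>Im (Z n)\<bar> \<le> B2"
      using bounded_real[where u="\<lambda>n. Im (Y n)" and v="\<lambda>n. Im (Z n)" and x=xr] ax I1 I2 by blast
    show "\<exists>B. \<forall>n. cmod (y n) \<le> B \<and> cmod (z n) \<le> B"
    proof (intro exI allI)
      fix n
      have "cmod (y n) \<le> cmod yy + cmod (Y n)" unfolding Yy by (rule norm_triangle_ineq)
      moreover have "cmod (z n) \<le> cmod zz + cmod (Z n)" unfolding Zz by (rule norm_triangle_ineq)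
      moreover have "cmod (Y n) \<le> \<bar>Re (Y n)\<bar> + \<bar>Im (Y n)\<bar>" by (rule cmod_le)
      moreover have "cmod (Z n) \<le> \<bar>Re (Z n)\<bar> + \<bar>Im (Z n)\<bar>" by (rule cmod_le)
      moreover have "cmod yy \<ge> 0" "cmod zz \<ge> 0" by simp_all
      ultimately show "cmod (y n) \<le> B1 + B2 + cmod yy + cmod zz \<and> cmod (z n) \<le> B1 + B2 + cmod yy + cmod zz"
        using B1[rule_format, of n] B2[rule_format, of n] by linarith
    qed
  qed

  have P2: "(x = 2 \<or> x = -2) \<longrightarrow>
        (\<exists>C. \<forall>n. cmod (y n) \<le> C * (1 + (real_of_int n)\<^sup>2) \<and>
                  cmod (z n) \<le> C * (1 + (real_of_int n)\<^sup>2))"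
  proof
    assume "x = 2 \<or> x = -2"
    then have x2: "x\<^sup>2 = 4" by auto
    have rec2: "y (n+1) + y (n-1) = 2 * y n + (2*q - x*r) \<and> z (n+1) + z (n-1) = 2 * z n + (2*r - x*q)" for n
    proof -
      have e1: "y (n+1) = q - x * z n - y n" using yrec by blast
      have e4: "z (n+1) = r - x * y (n+1) - z n" using zrec by blast
      have e2: "y (n-1+1) = q - x * z (n-1) - y (n-1)" using yrec by blast
      have e3: "z (n-1+1) = r - x * y (n-1+1) - z (n-1)" using zrec by blast
      have "n - 1 + 1 = n" by simp
      then have e2': "y n = q - x * z (n-1) - y (n-1)" and e3': "z n = r - x * y n - z (n-1)"
        using e2 e3 by simp_all
      have "y (n+1) + y (n-1) = 2 * y n + (2*q - x*r)" using e1 e2' e3' x2 by algebra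
      moreover have "z (n+1) + z (n-1) = 2 * z n + (2*r - x*q)" using e1 e4 e3' x2 by algebra
      ultimately show ?thesis by blast
    qed
    have ry: "\<forall>n. y (n+1) + y (n-1) = 2 * y n + (2*q - x*r)" using rec2 by blast
    have rz: "\<forall>n. z (n+1) + z (n-1) = 2 * z n + (2*r - x*q)" using rec2 by blast
    obtain C1 where C1: "\<forall>n. cmod (y n) \<le> C1 * (1 + (real_of_int n)\<^sup>2)" using quad[OF ry] by blast
    obtain C2 where C2: "\<forall>n. cmod (z n) \<le> C2 * (1 + (real_of_int n)\<^sup>2)" using quad[OF rz] by blast
    show "\<exists>C. \<forall>n. cmod (y n) \<le> C * (1 + (real_of_int n)\<^sup>2) \<and> cmod (z n) \<le> C * (1 + (real_of_int n)\<^sup>2)"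
    proof (intro exI allI conjI)
      fix n
      have pos: "0 \<le> 1 + (real_of_int n)\<^sup>2" by (simp add: add_nonneg_nonneg)
      show "cmod (y n) \<le> max C1 C2 * (1 + (real_of_int n)\<^sup>2)"
        using C1 mult_right_mono[OF max.cobounded1 pos, of C1 C2] by (meson order_trans)
      show "cmod (z n) \<le> max C1 C2 * (1 + (real_of_int n)\<^sup>2)"
        using C2 mult_right_mono[OF max.cobounded2 pos, of C2 C1] by (meson order_trans)
    qed
  qed

  have P34: "(\<not> degenerate p q r s x \<longrightarrow>
        (exp_growth_top y \<and> exp_growth_top z \<and> exp_growth_bot y \<and> exp_growth_bot z))
     \<and> (degenerate p q r s x \<longrightarrow>
        (((y \<longlongrightarrow> yy) at_bot \<and> (z \<longlongrightarrow> zz) at_bot \<and> exp_growth_top y \<and> exp_growth_top z) \<and>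
          \<not> ((y \<longlongrightarrow> yy) at_top \<and> (z \<longlongrightarrow> zz) at_top \<and> exp_growth_bot y \<and> exp_growth_bot z) \<and>
          \<not> (\<forall>n. y n = yy \<and> z n = zz)
       \<or> \<not> ((y \<longlongrightarrow> yy) at_bot \<and> (z \<longlongrightarrow> zz) at_bot \<and> exp_growth_top y \<and> exp_growth_top z) \<and>
          ((y \<longlongrightarrow> yy) at_top \<and> (z \<longlongrightarrow> zz) at_top \<and> exp_growth_bot y \<and> exp_growth_bot z) \<and>
          \<not> (\<forall>n. y n = yy \<and> z n = zz)
       \<or> \<not> ((y \<longlongrightarrow> yy) at_bot \<and> (z \<longlongrightarrow> zz) at_bot \<and> exp_growth_top y \<and> exp_growth_top z) \<and>
          \<not> ((y \<longlongrightarrow> yy) at_top \<and> (z \<longlongrightarrow> zz) at_top \<and> exp_growth_bot y \<and> exp_growth_bot z) \<and>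
          (\<forall>n. y n = yy \<and> z n = zz)))"
    if xn: "x \<notin> complex_of_real ` {-2..2}"
  proof -
    have d: "4 - x\<^sup>2 \<noteq> 0"
    proof
      assume "4 - x\<^sup>2 = 0"
      then have "(x - 2) * (x + 2) = 0" by algebra
      then have "x = 2 \<or> x = -2" by (simp add: eq_neg_iff_add_eq_0)
      then have "x \<in> complex_of_real ` {-2..2}" by (auto intro: image_eqI[of _ _ 2] image_eqI[of _ _ "-2"])
      then show False using xn by blast
    qed
    from cen[OF d] have hY: "\<forall>n. Y (n+1) = -x * Z n - Y n" and hZ: "\<forall>n. Z (n+1) = -x * Y (n+1) - Z n"
      and hK: "((Y 0)\<^sup>2 + (Z 0)\<^sup>2 + x * Y 0 * Z 0) * (4 - x\<^sup>2) = D" by blast+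
    obtain \<alpha> \<beta> where sab: "\<alpha> + \<beta> = -x" and pab: "\<alpha> * \<beta> = 1" and ga: "cmod \<alpha> > 1"
      using roots[OF xn] by blast
    have nab: "cmod \<alpha> * cmod \<beta> = 1" using pab by (metis norm_mult norm_one)
    have gb: "cmod \<beta> < 1"
    proof (rule ccontr)
      assume "\<not> cmod \<beta> < 1"
      then have "cmod \<alpha> * 1 \<le> cmod \<alpha> * cmod \<beta>" by (intro mult_left_mono) auto
      then show False using nab ga by simp
    qed
    have bnz: "\<beta> \<noteq> 0" and anz: "\<alpha> \<noteq> 0" using pab by auto
    have dab: "\<beta> - \<alpha> \<noteq> 0" using ga gb by auto
    define a where "a n = Z n - \<alpha> * Y n" for n
    define b where "b n = Z n - \<beta> * Y n" for n
    have arec: "\<forall>n. a (n+1) = \<beta>^2 * a n" unfolding a_def using ab_step[OF hY hZ sab pab] by blast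
    have sba: "\<beta> + \<alpha> = -x" using sab by (simp add: add.commute)
    have pba: "\<beta> * \<alpha> = 1" using pab by (simp add: mult.commute)
    have brec: "\<forall>n. b (n+1) = \<alpha>^2 * b n" unfolding b_def using ab_step[OF hY hZ sba pba] by blast
    have k1: "\<beta>^2 * \<alpha>^2 = 1" using pab by (metis power_mult_distrib mult.commute one_power2)
    have k2: "\<alpha>^2 * \<beta>^2 = 1" using k1 by (simp add: mult.commute)
    have ga': "\<And>m. a (int m) = (\<beta>^2)^m * a 0 \<and> a (- int m) = (\<alpha>^2)^m * a 0" using geo[OF arec k1] by blast
    have gb': "\<And>m. b (int m) = (\<alpha>^2)^m * b 0 \<and> b (- int m) = (\<beta>^2)^m * b 0" using geo[OF brec k2] by blast
    have Yf: "y n = yy + (a n - b n) / (\<beta> - \<alpha>)" for n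
    proof -
      have "(\<beta> - \<alpha>) * Y n = a n - b n" unfolding a_def b_def by algebra
      then have "Y n = (a n - b n) / (\<beta> - \<alpha>)" using dab by (simp add: field_simps)
      then show ?thesis using Yy by simp
    qed
    have Zf: "z n = zz + (\<beta> * a n - \<alpha> * b n) / (\<beta> - \<alpha>)" for n
    proof -
      have "(\<beta> - \<alpha>) * Z n = \<beta> * a n - \<alpha> * b n" unfolding a_def b_def by algebra
      then have "Z n = (\<beta> * a n - \<alpha> * b n) / (\<beta> - \<alpha>)" using dab by (simp add: field_simps)
      then show ?thesis using Zz by simp
    qed
    have FyT: "\<forall>m. y (int m) = yy + (1 * (\<beta>^2)^m * a 0 - 1 * (\<alpha>^2)^m * b 0) / (\<beta> - \<alpha>)"
      using Yf ga' gb' by simp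
    have FzT: "\<forall>m. z (int m) = zz + (\<beta> * (\<beta>^2)^m * a 0 - \<alpha> * (\<alpha>^2)^m * b 0) / (\<beta> - \<alpha>)"
      using Zf ga' gb' by (simp add: mult.assoc)
    have FyB: "\<forall>m. y (- int m) = yy + ((-1) * (\<beta>^2)^m * b 0 - (-1) * (\<alpha>^2)^m * a 0) / (\<beta> - \<alpha>)"
    proof
      fix m
      have "a (- int m) - b (- int m) = (-1) * (\<beta>^2)^m * b 0 - (-1) * (\<alpha>^2)^m * a 0"
        using ga' gb' by simp
      then show "y (- int m) = yy + ((-1) * (\<beta>^2)^m * b 0 - (-1) * (\<alpha>^2)^m * a 0) / (\<beta> - \<alpha>)"
        using Yf[of "- int m"] by simp
    qed
    have FzB: "\<forall>m. z (- int m) = zz + ((-\<alpha>) * (\<beta>^2)^m * b 0 - (-\<beta>) * (\<alpha>^2)^m * a 0) / (\<beta> - \<alpha>)"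
    proof
      fix m
      have "\<beta> * a (- int m) - \<alpha> * b (- int m) = (-\<alpha>) * (\<beta>^2)^m * b 0 - (-\<beta>) * (\<alpha>^2)^m * a 0"
        using ga' gb' by (simp add: algebra_simps)
      then show "z (- int m) = zz + ((-\<alpha>) * (\<beta>^2)^m * b 0 - (-\<beta>) * (\<alpha>^2)^m * a 0) / (\<beta> - \<alpha>)"
        using Zf[of "- int m"] by simp
    qed
    have cu: "cmod (\<beta>^2) < 1" using gb by (simp add: norm_power power_less_one_iff abs_less_iff power_strict_mono)
    have cv: "cmod (\<alpha>^2) > 1" using ga by (simp add: norm_power one_less_power)
    have yT: "(b 0 \<noteq> 0 \<longrightarrow> exp_growth_top y) \<and> (b 0 = 0 \<longrightarrow> (y \<longlongrightarrow> yy) at_top)"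
      by (rule top_all[OF FyT cu cv dab]) simp
    have zT: "(b 0 \<noteq> 0 \<longrightarrow> exp_growth_top z) \<and> (b 0 = 0 \<longrightarrow> (z \<longlongrightarrow> zz) at_top)"
      by (rule top_all[OF FzT cu cv dab anz])
    have yB: "(a 0 \<noteq> 0 \<longrightarrow> exp_growth_bot y) \<and> (a 0 = 0 \<longrightarrow> (y \<longlongrightarrow> yy) at_bot)"
      by (rule bot_all[OF FyB cu cv dab]) simp
    have zB: "(a 0 \<noteq> 0 \<longrightarrow> exp_growth_bot z) \<and> (a 0 = 0 \<longrightarrow> (z \<longlongrightarrow> zz) at_bot)"
      by (rule bot_all[OF FzB cu cv dab]) (simp add: bnz)
    have "a 0 * b 0 = (Y 0)\<^sup>2 + (Z 0)\<^sup>2 + x * Y 0 * Z 0" unfolding a_def b_def using sab pab by algebra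
    then have "a 0 * b 0 * (4 - x\<^sup>2) = D" using hK by simp
    then have deg: "degenerate p q r s x \<longleftrightarrow> a 0 = 0 \<or> b 0 = 0" using degD d by auto
    have allz: "\<forall>n. y n = yy \<and> z n = zz" if "a 0 = 0" "b 0 = 0"
    proof
      fix n
      obtain m where "n = int m \<or> n = - int m" using int_cases_nat by blast
      then have "a n = 0 \<and> b n = 0" using ga' gb' that by auto
      then show "y n = yy \<and> z n = zz" using Yf Zf by simp
    qed
    have constT: "(y \<longlongrightarrow> yy) at_top \<and> (y \<longlongrightarrow> yy) at_bot" if "\<forall>n. y n = yy \<and> z n = zz"
    proof -
      have "y = (\<lambda>_. yy)" using that by auto
      then show ?thesis by simp
    qed
    show ?thesis
    proof (rule conjI; rule impI)
      assume "\<not> degenerate p q r s x"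
      then have "a 0 \<noteq> 0" "b 0 \<noteq> 0" using deg by auto
      then show "exp_growth_top y \<and> exp_growth_top z \<and> exp_growth_bot y \<and> exp_growth_bot z"
        using yT zT yB zB by blast
    next
      assume "degenerate p q r s x"
      then consider "a 0 = 0" "b 0 \<noteq> 0" | "a 0 \<noteq> 0" "b 0 = 0" | "a 0 = 0" "b 0 = 0" using deg by blast
      then show "((y \<longlongrightarrow> yy) at_bot \<and> (z \<longlongrightarrow> zz) at_bot \<and> exp_growth_top y \<and> exp_growth_top z) \<and>
          \<not> ((y \<longlongrightarrow> yy) at_top \<and> (z \<longlongrightarrow> zz) at_top \<and> exp_growth_bot y \<and> exp_growth_bot z) \<and>
          \<not> (\<forall>n. y n = yy \<and> z n = zz)
       \<or> \<not> ((y \<longlongrightarrow> yy) at_bot \<and> (z \<longlongrightarrow> zz) at_bot \<and> exp_growth_top y \<and> exp_growth_top z) \<and>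
          ((y \<longlongrightarrow> yy) at_top \<and> (z \<longlongrightarrow> zz) at_top \<and> exp_growth_bot y \<and> exp_growth_bot z) \<and>
          \<not> (\<forall>n. y n = yy \<and> z n = zz)
       \<or> \<not> ((y \<longlongrightarrow> yy) at_bot \<and> (z \<longlongrightarrow> zz) at_bot \<and> exp_growth_top y \<and> exp_growth_top z) \<and>
          \<not> ((y \<longlongrightarrow> yy) at_top \<and> (z \<longlongrightarrow> zz) at_top \<and> exp_growth_bot y \<and> exp_growth_bot z) \<and>
          (\<forall>n. y n = yy \<and> z n = zz)"
      proof cases
        case 1
        have gt: "exp_growth_top y" using yT 1 by blast
        have "\<not> (y \<longlongrightarrow> yy) at_top" using NT_top[OF gt] by blast
        then show ?thesis using 1 yT zT yB zB constT by blast
      next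
        case 2
        have gt: "exp_growth_bot y" using yB 2 by blast
        have "\<not> (y \<longlongrightarrow> yy) at_bot" using NT_bot[OF gt] by blast
        then show ?thesis using 2 yT zT yB zB constT by blast
      next
        case 3
        have C: "\<forall>n. y n = yy \<and> z n = zz" using allz 3 by blast
        have "\<not> exp_growth_top y" using NT_top constT[OF C] by blast
        moreover have "\<not> exp_growth_bot y" using NT_bot constT[OF C] by blast
        ultimately show ?thesis using C by blast
      qed
    qed
  qed
  show ?thesis unfolding Let_def using P1 P2 P34 by blast
qed

end
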